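(* Let $H$ be a complex Hilbert space, $A\in B(H)$ a nonzero positive semidefinite operator, and $T\in B_{A^{1/2}}(H)$. Then $T$ is $A$-invertible in $B_{A^{1/2}}(H)$ if and only if there exist operators $S_1,S_2\in B_{A^{1/2}}(H)$ such that $ATS_1=AS_2T=A$.
   Context: $B_{A^{1/2}}(H)=\{X\in B(H): R(X^*A^{1/2})\subset R(A^{1/2})\}$. A nonzero $T\in B_{A^{1/2}}(H)$ is $A$-invertible in $B_{A^{1/2}}(H)$ if there is a nonzero $S\in B_{A^{1/2}}(H)$ with $ATS=AST=A$. *)

theory Defs
  imports "HOL-Analysis.Analysis"
begin

text \<open>The distribution has no complex inner product spaces, so we introduce a
class: a (real) Banach space carrying a complex scalar multiplication that
extends the real one, and a complex inner product (linear in the first,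
conjugate linear in the second argument) inducing the norm.\<close>

class chilbert = banach +
  fixes scaleC :: "complex \<Rightarrow> 'a \<Rightarrow> 'a"
    and cinner :: "'a \<Rightarrow> 'a \<Rightarrow> complex"
  assumes scaleC_of_real: "scaleC (complex_of_real r) x = scaleR r x"
    and scaleC_add_right: "scaleC c (x + y) = scaleC c x + scaleC c y"
    and scaleC_add_left: "scaleC (c + d) x = scaleC c x + scaleC d x"
    and scaleC_scaleC: "scaleC c (scaleC d x) = scaleC (c * d) x"
    and scaleC_one: "scaleC 1 x = x"
    and cinner_commute: "cinner x y = cnj (cinner y x)"
    and cinner_add_left: "cinner (x + y) z = cinner x z + cinner y z"
    and cinner_scaleC_left: "cinner (scaleC c x) y = c * cinner x y"
    and cinner_norm: "cinner x x = complex_of_real ((norm x)\<^sup>2)"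

definition bounded_clinear :: "('a::chilbert \<Rightarrow> 'a) \<Rightarrow> bool" where
  "bounded_clinear f \<longleftrightarrow> bounded_linear f \<and> (\<forall>c x. f (scaleC c x) = scaleC c (f x))"

definition BH :: "('a::chilbert \<Rightarrow> 'a) set" where
  "BH = {f. bounded_clinear f}"

definition adjoint :: "('a::chilbert \<Rightarrow> 'a) \<Rightarrow> ('a \<Rightarrow> 'a)" where
  "adjoint X = (THE Y. \<forall>x y. cinner (X x) y = cinner x (Y y))"

definition positive_op :: "('a::chilbert \<Rightarrow> 'a) \<Rightarrow> bool" where
  "positive_op A \<longleftrightarrow> A \<in> BH \<and>
     (\<forall>x. Im (cinner (A x) x) = 0 \<and> Re (cinner (A x) x) \<ge> 0)"

definition op_sqrt :: "('a::chilbert \<Rightarrow> 'a) \<Rightarrow> ('a \<Rightarrow> 'a)" where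
  "op_sqrt A = (THE R. positive_op R \<and> R \<circ> R = A)"

definition B_sqrtA :: "('a::chilbert \<Rightarrow> 'a) \<Rightarrow> ('a \<Rightarrow> 'a) set" where
  "B_sqrtA A = {X \<in> BH. range (adjoint X \<circ> op_sqrt A) \<subseteq> range (op_sqrt A)}"

definition A_invertible :: "('a::chilbert \<Rightarrow> 'a) \<Rightarrow> ('a \<Rightarrow> 'a) \<Rightarrow> bool" where
  "A_invertible A T \<longleftrightarrow> T \<in> B_sqrtA A \<and> T \<noteq> (\<lambda>_. 0) \<and>
     (\<exists>S \<in> B_sqrtA A. S \<noteq> (\<lambda>_. 0) \<and> A \<circ> T \<circ> S = A \<and> A \<circ> S \<circ> T = A)"

end

theory Submission
  imports Defs
begin



lemma scaleC_zero_left[simp]: "scaleC 0 x = 0"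
  using scaleC_of_real[of 0 x] by simp

lemma scaleC_zero_right[simp]: "scaleC c 0 = 0"
  using scaleC_add_right[of c 0 0] by simp

lemma scaleC_minus_left: "scaleC (- c) x = - scaleC c x"
  using scaleC_add_left[of c "-c" x] by (simp add: minus_unique)

lemma scaleC_minus_right: "scaleC c (- x) = - scaleC c x"
  using scaleC_add_right[of c x "-x"] by (simp add: minus_unique)

lemma scaleC_diff_right: "scaleC c (x - y) = scaleC c x - scaleC c y"
  using scaleC_add_right[of c x "-y"] scaleC_minus_right by simp

lemma scaleC_diff_left: "scaleC (c - d) x = scaleC c x - scaleC d x"
  using scaleC_add_left[of c "-d" x] scaleC_minus_left by simp

lemma cinner_zero_left[simp]: "cinner 0 y = 0"
  using cinner_add_left[of 0 0 y] by simp

lemma cinner_minus_left: "cinner (- x) y = - cinner x y"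
  using cinner_add_left[of x "-x" y] by (simp add: minus_unique)

lemma cinner_diff_left: "cinner (x - y) z = cinner x z - cinner y z"
  using cinner_add_left[of x "-y" z] cinner_minus_left by simp

lemma cinner_add_right: "cinner x (y + z) = cinner x y + cinner x z"
  by (metis cinner_add_left cinner_commute complex_cnj_add)

lemma cinner_zero_right[simp]: "cinner x 0 = 0"
  using cinner_add_right[of x 0 0] by simp

lemma cinner_minus_right: "cinner x (- y) = - cinner x y"
  by (metis cinner_commute cinner_minus_left complex_cnj_minus)

lemma cinner_diff_right: "cinner x (y - z) = cinner x y - cinner x z"
  by (metis cinner_commute cinner_diff_left complex_cnj_diff)

lemma cinner_scaleC_right: "cinner x (scaleC c y) = cnj c * cinner x y"
  by (metis cinner_commute cinner_scaleC_left complex_cnj_mult)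

lemma cinner_scaleR_left: "cinner (scaleR r x) y = complex_of_real r * cinner x y"
  by (metis cinner_scaleC_left scaleC_of_real)

lemma cinner_scaleR_right: "cinner x (scaleR r y) = complex_of_real r * cinner x y"
  by (metis cinner_scaleC_right scaleC_of_real complex_cnj_complex_of_real)

lemma cinner_self_Re: "Re (cinner x x) = (norm x)\<^sup>2"
  by (simp add: cinner_norm)

lemma cinner_self_Im: "Im (cinner x x) = 0"
  by (simp add: cinner_norm)

lemma cinner_self_eq_zero: "cinner x x = 0 \<longleftrightarrow> x = 0"
  by (simp add: cinner_norm)

lemma Re_cinner_commute: "Re (cinner y x) = Re (cinner x y)"
  by (subst cinner_commute) simp

lemma norm_add_sq: "(norm (x + y))\<^sup>2 = (norm x)\<^sup>2 + (norm y)\<^sup>2 + 2 * Re (cinner x y)"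
proof -
  have "cinner (x+y) (x+y) = cinner x x + cinner x y + cinner y x + cinner y y"
    by (simp add: cinner_add_left cinner_add_right)
  then have "Re (cinner (x+y) (x+y)) = Re (cinner x x) + Re (cinner x y) + Re (cinner y x) + Re (cinner y y)"
    by simp
  then show ?thesis by (simp add: cinner_self_Re Re_cinner_commute)
qed

lemma norm_diff_sq: "(norm (x - y))\<^sup>2 = (norm x)\<^sup>2 + (norm y)\<^sup>2 - 2 * Re (cinner x y)"
  using norm_add_sq[of x "-y"] by (simp add: cinner_minus_right)

lemma Re_cinner_le: "\<bar>Re (cinner x y)\<bar> \<le> norm x * norm y"
proof (cases "y = 0")
  case True then show ?thesis by simp
next
  case False
  then have ny: "norm y > 0" by simp
  define t where "t = Re (cinner x y) / (norm y)\<^sup>2"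
  have "0 \<le> (norm (x - scaleR t y))\<^sup>2" by simp
  also have "\<dots> = (norm x)\<^sup>2 + t\<^sup>2 * (norm y)\<^sup>2 - 2 * t * Re (cinner x y)"
    by (simp add: norm_diff_sq cinner_scaleR_right power_mult_distrib)
  also have "\<dots> = (norm x)\<^sup>2 - (Re (cinner x y))\<^sup>2 / (norm y)\<^sup>2"
    using ny by (simp add: t_def field_simps power2_eq_square)
  finally have "(Re (cinner x y))\<^sup>2 \<le> (norm x * norm y)\<^sup>2"
    using ny by (simp add: field_simps power_mult_distrib)
  then have "\<bar>Re (cinner x y)\<bar> \<le> \<bar>norm x * norm y\<bar>"
    by (simp only: abs_le_square_iff)
  then show ?thesis by simp
qed

lemma norm_scaleC: "norm (scaleC c x) = cmod c * norm x"
proof -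
  have "cinner (scaleC c x) (scaleC c x) = c * cnj c * cinner x x"
    by (simp add: cinner_scaleC_left cinner_scaleC_right)
  also have "c * cnj c = complex_of_real ((cmod c)\<^sup>2)" by (metis complex_norm_square)
  finally have "complex_of_real ((norm (scaleC c x))\<^sup>2) = complex_of_real ((cmod c)\<^sup>2 * (norm x)\<^sup>2)"
    by (simp only: cinner_norm of_real_mult)
  then have "(norm (scaleC c x))\<^sup>2 = (cmod c * norm x)\<^sup>2"
    by (simp only: of_real_eq_iff power_mult_distrib)
  then show ?thesis
    by (simp add: power2_eq_iff_nonneg)
qed

lemma cinner_CS: "cmod (cinner x y) \<le> norm x * norm y"
proof (cases "cinner x y = 0")
  case True then show ?thesis by simp
next
  case False
  define u where "u = cnj (cinner x y) / cmod (cinner x y)"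
  have cu: "cmod u = 1" using False by (simp add: u_def norm_divide)
  have "cnj (cinner x y) * cinner x y = complex_of_real ((cmod (cinner x y))\<^sup>2)"
    by (metis complex_norm_square mult.commute)
  then have "u * cinner x y = complex_of_real (cmod (cinner x y))"
    using False by (simp add: u_def power2_eq_square)
  then have "cmod (cinner x y) = Re (cinner (scaleC u x) y)"
    by (simp add: cinner_scaleC_left)
  also have "\<dots> \<le> norm (scaleC u x) * norm y"
    using Re_cinner_le abs_le_D1 by blast
  also have "\<dots> = norm x * norm y" by (simp add: norm_scaleC cu)
  finally show ?thesis .
qed



lemma riesz:
  fixes f :: "'a::chilbert \<Rightarrow> complex"
  assumes add: "\<And>x y. f (x + y) = f x + f y"
    and hom: "\<And>c x. f (scaleC c x) = c * f x"
    and bnd: "\<And>x. cmod (f x) \<le> norm x * K"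
  shows "\<exists>y. \<forall>x. f x = cinner x y"
proof (cases "\<forall>x. f x = 0")
  case True then show ?thesis by (intro exI[of _ 0]) simp
next
  case False
  then obtain x0 where x0: "f x0 \<noteq> 0" by blast
  have homR: "f (scaleR r x) = complex_of_real r * f x" for r x
    by (metis hom scaleC_of_real)
  have f0: "f 0 = 0" using hom[of 0 0] by simp
  have fdiff: "f (x - y) = f x - f y" for x y
    using add[of "x - y" y] by simp
  have blin: "bounded_linear f"
    by (rule bounded_linear_intro[where K=K]) (auto simp: add homR scaleR_conv_of_real bnd)
  define C where "C = {x. f x = 1}"
  define x1 where "x1 = scaleC (1 / f x0) x0"
  have x1C: "x1 \<in> C" using x0 by (simp add: C_def x1_def hom)
  define d where "d = Inf ((\<lambda>x. (norm x)\<^sup>2) ` C)"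
  have bdd: "bdd_below ((\<lambda>x. (norm x)\<^sup>2) ` C)"
    by (rule bdd_belowI[where m=0]) auto
  have d_le: "d \<le> (norm x)\<^sup>2" if "x \<in> C" for x
    unfolding d_def using bdd that by (intro cInf_lower) auto
  have d_approx: "\<exists>x\<in>C. (norm x)\<^sup>2 < d + e" if "e > 0" for e
  proof -
    have "Inf ((\<lambda>x. (norm x)\<^sup>2) ` C) < d + e" using that by (simp add: d_def)
    then obtain v where "v \<in> (\<lambda>x. (norm x)\<^sup>2) ` C" "v < d + e"
      using cInf_lessD[of "(\<lambda>x. (norm x)\<^sup>2) ` C"] x1C by blast
    then show ?thesis by auto
  qed
  have "\<forall>n::nat. \<exists>x. x \<in> C \<and> (norm x)\<^sup>2 < d + inverse (real (Suc n))"
    using d_approx by (metis inverse_positive_iff_positive of_nat_0_less_iff zero_less_Suc)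
  then obtain xs where xs: "\<And>n. xs n \<in> C" "\<And>n. (norm (xs n))\<^sup>2 < d + inverse (real (Suc n))"
    by metis
  have mid: "4 * d \<le> (norm (xs n + xs m))\<^sup>2" for n m
  proof -
    have "scaleR (1/2) (xs n + xs m) \<in> C"
      using xs(1)[of n] xs(1)[of m] by (simp add: C_def homR add)
    then have "d \<le> (norm (scaleR (1/2) (xs n + xs m)))\<^sup>2" by (rule d_le)
    then show ?thesis by (simp add: power_mult_distrib power_divide)
  qed
  have par: "(norm (xs n - xs m))\<^sup>2 \<le> 2 * inverse (real (Suc n)) + 2 * inverse (real (Suc m))" for n m
  proof -
    have "(norm (xs n - xs m))\<^sup>2 = 2 * (norm (xs n))\<^sup>2 + 2 * (norm (xs m))\<^sup>2 - (norm (xs n + xs m))\<^sup>2"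
      using norm_add_sq[of "xs n" "xs m"] norm_diff_sq[of "xs n" "xs m"] by simp
    then show ?thesis using mid[of n m] xs(2)[of n] xs(2)[of m] by linarith
  qed
  have "Cauchy xs"
  proof (rule CauchyI)
    fix e :: real assume e: "0 < e"
    obtain M :: nat where M: "4 / e\<^sup>2 < real M" using reals_Archimedean2 by blast
    have Mpos: "0 < real M" using M e by (smt (verit) divide_pos_pos zero_less_power)
    show "\<exists>M. \<forall>m\<ge>M. \<forall>n\<ge>M. norm (xs m - xs n) < e"
    proof (intro exI allI impI)
      fix m n assume mn: "M \<le> m" "M \<le> n"
      have im: "inverse (real (Suc m)) \<le> inverse (real M)"
        using mn Mpos by (simp add: le_imp_inverse_le)
      have inn: "inverse (real (Suc n)) \<le> inverse (real M)"
        using mn Mpos by (simp add: le_imp_inverse_le)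
      have "4 * inverse (real M) < e\<^sup>2"
        using M e Mpos by (simp add: field_simps)
      then have "(norm (xs m - xs n))\<^sup>2 < e\<^sup>2"
        using par[of m n] im inn by linarith
      then show "norm (xs m - xs n) < e"
        using e by (simp add: power_less_imp_less_base)
    qed
  qed
  then obtain z where z: "xs \<longlonglongrightarrow> z"
    using Cauchy_convergent_iff convergent_def by blast
  have "(\<lambda>n. f (xs n)) \<longlonglongrightarrow> f z"
    by (rule bounded_linear.tendsto[OF blin z])
  moreover have "(\<lambda>n. f (xs n)) = (\<lambda>n. 1)" using xs(1) by (simp add: C_def)
  ultimately have fz: "f z = 1"
    using LIMSEQ_unique tendsto_const by metis
  have zmin: "(norm z)\<^sup>2 \<le> (norm w)\<^sup>2" if "w \<in> C" for w
  proof -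
    have "(\<lambda>n. (norm (xs n))\<^sup>2) \<longlonglongrightarrow> (norm z)\<^sup>2"
      by (intro tendsto_intros z)
    moreover have "(\<lambda>n. d + inverse (real (Suc n))) \<longlonglongrightarrow> d + 0"
      by (intro tendsto_intros LIMSEQ_inverse_real_of_nat)
    ultimately have "(norm z)\<^sup>2 \<le> d + 0"
      using xs(2) by (intro LIMSEQ_le[where X="\<lambda>n. (norm (xs n))\<^sup>2"]) (auto intro: less_imp_le)
    then show ?thesis using d_le[OF that] by linarith
  qed
  have orth: "cinner z k = 0" if fk: "f k = 0" for k
  proof (rule ccontr)
    assume a0: "cinner z k \<noteq> 0"
    define a where "a = cinner z k"
    define s where "s = 1 / ((norm k)\<^sup>2 + 1)"
    have s0: "s > 0" by (simp add: s_def add_nonneg_pos)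
    have h1: "0 < (norm k)\<^sup>2 + 1" by (simp add: add_nonneg_pos)
    have sk: "s * (norm k)\<^sup>2 < 1"
      unfolding s_def using h1 by (simp only: divide_less_eq_1_pos times_divide_eq_left mult_1)
    define t where "t = - (complex_of_real s * a)"
    have "z + scaleC t k \<in> C" using fz fk by (simp add: C_def add hom)
    then have "(norm z)\<^sup>2 \<le> (norm (z + scaleC t k))\<^sup>2" by (rule zmin)
    also have "\<dots> = (norm z)\<^sup>2 + (cmod t * norm k)\<^sup>2 + 2 * Re (cinner z (scaleC t k))"
      by (simp add: norm_add_sq norm_scaleC)
    also have "cinner z (scaleC t k) = - complex_of_real (s * (cmod a)\<^sup>2)"
    proof -
      have "cnj a * a = complex_of_real ((cmod a)\<^sup>2)" by (metis complex_norm_square mult.commute)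
      then show ?thesis by (simp add: cinner_scaleC_right t_def a_def[symmetric] mult.assoc)
    qed
    also have "cmod t = s * cmod a" using s0 by (simp add: t_def norm_mult)
    finally have "0 \<le> (s * cmod a * norm k)\<^sup>2 - 2 * (s * (cmod a)\<^sup>2)"
      by (simp add: power_mult_distrib)
    moreover have "(s * cmod a * norm k)\<^sup>2 = (s * (cmod a)\<^sup>2) * (s * (norm k)\<^sup>2)"
      by (simp add: power2_eq_square)
    ultimately have "(s * (cmod a)\<^sup>2) * 2 \<le> (s * (cmod a)\<^sup>2) * (s * (norm k)\<^sup>2)"
      by linarith
    moreover have "s * (cmod a)\<^sup>2 > 0" using s0 a0 by (simp add: a_def)
    ultimately have "2 \<le> s * (norm k)\<^sup>2"
      by (simp only: mult_le_cancel_left_pos)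
    then show False using sk by linarith
  qed
  have z0: "z \<noteq> 0" using fz f0 by auto
  have nz: "(norm z)\<^sup>2 > 0" using z0 by simp
  show ?thesis
  proof (intro exI allI)
    fix x
    have "f (x - scaleC (f x) z) = 0" by (simp add: fdiff hom fz)
    then have "cinner z (x - scaleC (f x) z) = 0" by (rule orth)
    then have "cinner z x = cnj (f x) * cinner z z"
      by (simp add: cinner_diff_right cinner_scaleC_right)
    then have eq: "cinner x z = f x * complex_of_real ((norm z)\<^sup>2)"
      by (metis cinner_commute cinner_norm complex_cnj_cnj complex_cnj_complex_of_real complex_cnj_mult)
    define n where "n = (norm z)\<^sup>2"
    have "cinner x (scaleR (1 / n) z) = complex_of_real (1 / n) * (f x * complex_of_real n)"
      by (simp add: cinner_scaleR_right eq n_def)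
    also have "\<dots> = f x * complex_of_real (n * (1 / n))"
      by (simp only: of_real_mult ac_simps)
    also have "n * (1 / n) = 1" using nz by (simp add: n_def)
    finally show "f x = cinner x (scaleR (1 / (norm z)\<^sup>2) z)" by (simp add: n_def)
  qed
qed



lemma BH_bl: "X \<in> BH \<Longrightarrow> bounded_linear X"
  by (simp add: BH_def bounded_clinear_def)

lemma BH_scaleC: "X \<in> BH \<Longrightarrow> X (scaleC c x) = scaleC c (X x)"
  by (simp add: BH_def bounded_clinear_def)

lemma BH_add: "X \<in> BH \<Longrightarrow> X (x + y) = X x + X y"
  by (metis BH_bl bounded_linear.linear linear_add)

lemma BH_diff: "X \<in> BH \<Longrightarrow> X (x - y) = X x - X y"
  by (metis BH_bl bounded_linear.linear linear_diff)

lemma BH_zero: "X \<in> BH \<Longrightarrow> X 0 = 0"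
  by (metis BH_bl bounded_linear.linear linear_0)

lemma BH_bound: "X \<in> BH \<Longrightarrow> \<exists>K>0. \<forall>x. norm (X x) \<le> norm x * K"
  using BH_bl bounded_linear.pos_bounded by blast

lemma adjoint_ex:
  fixes X :: "'a::chilbert \<Rightarrow> 'a"
  assumes "X \<in> BH"
  shows "\<exists>Y. \<forall>x y. cinner (X x) y = cinner x (Y y)"
proof -
  obtain K where K: "K > 0" "\<And>x. norm (X x) \<le> norm x * K" using BH_bound[OF assms] by blast
  have "\<forall>y. \<exists>v. \<forall>x. cinner (X x) y = cinner x v"
  proof
    fix y
    show "\<exists>v. \<forall>x. cinner (X x) y = cinner x v"
    proof (rule riesz[where K="K * norm y"])
      fix x x' show "cinner (X (x + x')) y = cinner (X x) y + cinner (X x') y"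
        by (simp add: BH_add[OF assms] cinner_add_left)
    next
      fix c x show "cinner (X (scaleC c x)) y = c * cinner (X x) y"
        by (simp add: BH_scaleC[OF assms] cinner_scaleC_left)
    next
      fix x
      have "cmod (cinner (X x) y) \<le> norm (X x) * norm y" by (rule cinner_CS)
      also have "\<dots> \<le> norm x * K * norm y" using K(2)[of x] by (simp add: mult_right_mono)
      finally show "cmod (cinner (X x) y) \<le> norm x * (K * norm y)" by (simp add: ac_simps)
    qed
  qed
  then obtain Y where "\<forall>y x. cinner (X x) y = cinner x (Y y)"
    using choice[of "\<lambda>y v. \<forall>x. cinner (X x) y = cinner x v"] by blast
  then show ?thesis by blast
qed

lemma adjoint_prop:
  fixes X :: "'a::chilbert \<Rightarrow> 'a"
  assumes "X \<in> BH"
  shows "cinner (X x) y = cinner x (adjoint X y)"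
proof -
  obtain Y where Y: "\<forall>x y. cinner (X x) y = cinner x (Y y)" using adjoint_ex[OF assms] by blast
  have "adjoint X = Y"
    unfolding adjoint_def
  proof (rule the_equality)
    show "\<forall>x y. cinner (X x) y = cinner x (Y y)" by (rule Y)
  next
    fix Z assume Z: "\<forall>x y. cinner (X x) y = cinner x (Z y)"
    show "Z = Y"
    proof
      fix y
      have "cinner (Z y - Y y) (Z y - Y y) = 0"
        using Z Y by (simp add: cinner_diff_right cinner_diff_left)
      then show "Z y = Y y" by (simp add: cinner_self_eq_zero)
    qed
  qed
  then show ?thesis using Y by simp
qed

lemma pos_BH: "positive_op P \<Longrightarrow> P \<in> BH"
  by (simp add: positive_op_def)

lemma pos_real: "positive_op P \<Longrightarrow> cinner (P x) x = complex_of_real (Re (cinner (P x) x))"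
  by (simp add: positive_op_def complex_eq_iff)

lemma pos_nonneg: "positive_op P \<Longrightarrow> Re (cinner (P x) x) \<ge> 0"
  by (simp add: positive_op_def)

lemma pos_selfadj:
  fixes P :: "'a::chilbert \<Rightarrow> 'a"
  assumes P: "positive_op P"
  shows "cinner (P x) y = cinner x (P y)"
proof -
  have PB: "P \<in> BH" using P by (rule pos_BH)
  define s where "s u v = cinner (P u) v - cinner u (P v)" for u v
  have diag: "s v v = 0" for v
  proof -
    have "cinner v (P v) = cnj (cinner (P v) v)" by (rule cinner_commute)
    also have "\<dots> = cinner (P v) v" using pos_real[OF P, of v] by (metis complex_cnj_complex_of_real)
    finally show ?thesis by (simp add: s_def)
  qed
  have e1: "s (x + y) (x + y) = s x x + s x y + s y x + s y y"
    by (simp add: s_def BH_add[OF PB] cinner_add_left cinner_add_right algebra_simps)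
  have e2: "s (x + scaleC \<i> y) (x + scaleC \<i> y) = s x x + (- \<i>) * s x y + \<i> * s y x + s y y"
    by (simp add: s_def BH_add[OF PB] BH_scaleC[OF PB] cinner_add_left cinner_add_right
        cinner_scaleC_left cinner_scaleC_right algebra_simps)
  have a1: "s x y + s y x = 0" using e1 diag by simp
  have a2: "\<i> * (s y x - s x y) = 0" using e2 diag by (simp add: algebra_simps)
  then have "s y x = s x y" by simp
  with a1 have "s x y = 0" by simp
  then show ?thesis by (simp add: s_def)
qed

lemma pos_CS:
  fixes P :: "'a::chilbert \<Rightarrow> 'a"
  assumes P: "positive_op P"
  shows "(cmod (cinner (P x) y))\<^sup>2 \<le> Re (cinner (P x) x) * Re (cinner (P y) y)"
proof -
  have PB: "P \<in> BH" using P by (rule pos_BH)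
  define c where "c = cinner (P x) y"
  define N where "N = (cmod c)\<^sup>2"
  define qx where "qx = Re (cinner (P x) x)"
  define qy where "qy = Re (cinner (P y) y)"
  have hx: "cinner (P x) x = complex_of_real qx" using pos_real[OF P] by (simp add: qx_def)
  have hy: "cinner (P y) y = complex_of_real qy" using pos_real[OF P] by (simp add: qy_def)
  have hyx: "cinner (P y) x = cnj c"
    by (metis c_def cinner_commute pos_selfadj[OF P])
  have hN: "c * cnj c = complex_of_real N" by (metis N_def complex_norm_square)
  have qpos: "0 \<le> qx - 2 * t * N + t\<^sup>2 * N * qy" for t
  proof -
    define w where "w = complex_of_real t * c"
    define v where "v = x - scaleC w y"
    have "cinner (P v) v = cinner (P x) x - cnj w * cinner (P x) y - w * cinner (P y) x + w * cnj w * cinner (P y) y"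
      by (simp add: v_def BH_diff[OF PB] BH_scaleC[OF PB] cinner_diff_left cinner_diff_right
          cinner_scaleC_left cinner_scaleC_right algebra_simps)
    also have "\<dots> = complex_of_real qx - complex_of_real t * (c * cnj c) - complex_of_real t * (c * cnj c)
        + complex_of_real t * complex_of_real t * (c * cnj c) * complex_of_real qy"
      by (simp add: hx hy hyx w_def c_def[symmetric] algebra_simps)
    also have "\<dots> = complex_of_real (qx - 2 * t * N + t\<^sup>2 * N * qy)"
      by (simp add: hN power2_eq_square algebra_simps)
    finally have "Re (cinner (P v) v) = qx - 2 * t * N + t\<^sup>2 * N * qy" by simp
    then show ?thesis using pos_nonneg[OF P, of v] by simp
  qed
  have qy0: "qy \<ge> 0" using pos_nonneg[OF P] by (simp add: qy_def)
  have N0: "N \<ge> 0" by (simp add: N_def)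
  show ?thesis
  proof (cases "qy > 0")
    case True
    have "0 \<le> qx - 2 * (1/qy) * N + (1/qy)\<^sup>2 * N * qy" by (rule qpos)
    also have "\<dots> = qx - N / qy" using True by (simp add: power2_eq_square field_simps)
    finally have "N / qy \<le> qx" by simp
    then have "N \<le> qx * qy" using True by (simp add: divide_le_eq)
    then show ?thesis by (simp add: N_def c_def qx_def qy_def)
  next
    case False
    then have "qy = 0" using qy0 by simp
    have "N = 0"
    proof (rule ccontr)
      assume "N \<noteq> 0"
      then have Np: "N > 0" using N0 by simp
      have "0 \<le> qx - 2 * ((qx + 1) / (2 * N)) * N + ((qx + 1) / (2 * N))\<^sup>2 * N * qy" by (rule qpos)
      also have "\<dots> = -1" using Np \<open>qy = 0\<close> by (simp add: field_simps)
      finally show False by simp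
    qed
    then show ?thesis using \<open>qy = 0\<close> by (simp add: N_def c_def qy_def)
  qed
qed

lemma pos_norm_bound:
  fixes P :: "'a::chilbert \<Rightarrow> 'a"
  assumes P: "positive_op P" and K: "K \<ge> 0" "\<And>v. norm (P v) \<le> norm v * K"
  shows "(norm (P x))\<^sup>2 \<le> K * Re (cinner (P x) x)"
proof (cases "P x = 0")
  case True then show ?thesis using pos_nonneg[OF P, of x] K by simp
next
  case False
  define n where "n = (norm (P x))\<^sup>2"
  have n0: "n > 0" using False by (simp add: n_def)
  have "cinner (P x) (P x) = complex_of_real n" by (simp add: cinner_norm n_def)
  then have "n\<^sup>2 \<le> Re (cinner (P x) x) * Re (cinner (P (P x)) (P x))"
    using pos_CS[OF P, of x "P x"] by (simp add: n0 abs_of_pos)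
  also have "Re (cinner (P (P x)) (P x)) \<le> K * n"
  proof -
    have "Re (cinner (P (P x)) (P x)) \<le> norm (P (P x)) * norm (P x)"
      using Re_cinner_le abs_le_D1 by blast
    also have "\<dots> \<le> norm (P x) * K * norm (P x)"
      using K(2)[of "P x"] by (simp add: mult_right_mono)
    finally show ?thesis by (simp add: n_def power2_eq_square ac_simps)
  qed
  then have "Re (cinner (P x) x) * Re (cinner (P (P x)) (P x)) \<le> Re (cinner (P x) x) * (K * n)"
    using pos_nonneg[OF P, of x] by (simp add: mult_left_mono)
  finally have "n * n \<le> (K * Re (cinner (P x) x)) * n" by (simp add: power2_eq_square ac_simps)
  then have "n \<le> K * Re (cinner (P x) x)" using n0 by (simp only: mult_le_cancel_right_pos)
  then show ?thesis by (simp add: n_def)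
qed

lemma pos_zero:
  fixes P :: "'a::chilbert \<Rightarrow> 'a"
  assumes P: "positive_op P" and "Re (cinner (P x) x) = 0"
  shows "P x = 0"
proof -
  obtain K where K: "K > 0" "\<And>v. norm (P v) \<le> norm v * K" using BH_bound[OF pos_BH[OF P]] by blast
  have "(norm (P x))\<^sup>2 \<le> 0" using pos_norm_bound[OF P, of K x] K assms(2) by simp
  then show ?thesis by simp
qed

lemma ker_inv:
  fixes A R X :: "'a::chilbert \<Rightarrow> 'a"
  assumes A: "positive_op A" and R: "positive_op R" and RR: "R \<circ> R = A"
    and X: "X \<in> BH" and rng: "range (adjoint X \<circ> R) \<subseteq> range R"
    and z: "A z = 0"
  shows "A (X z) = 0"
proof -
  have RB: "R \<in> BH" using R by (rule pos_BH)
  have Az: "A v = R (R v)" for v using RR by (metis comp_apply)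
  have "cinner (R z) (R z) = cinner (R (R z)) z" using pos_selfadj[OF R] by simp
  also have "\<dots> = 0" using z Az by simp
  finally have Rz: "R z = 0" by (simp add: cinner_self_eq_zero)
  have "cinner (R (X z)) w = 0" for w
  proof -
    have "adjoint X (R w) \<in> range R" using rng by auto
    then obtain v where v: "adjoint X (R w) = R v" by auto
    have "cinner (R (X z)) w = cinner (X z) (R w)" by (rule pos_selfadj[OF R])
    also have "\<dots> = cinner z (adjoint X (R w))" by (rule adjoint_prop[OF X])
    also have "\<dots> = cinner z (R v)" by (simp add: v)
    also have "\<dots> = cinner (R z) v" by (simp add: pos_selfadj[OF R])
    finally show ?thesis by (simp add: Rz)
  qed
  then have "R (X z) = 0" using cinner_self_eq_zero by blast
  then show ?thesis by (simp add: Az BH_zero[OF RB])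
qed



lemma bb_Cauchy_product_sums:
  fixes a :: "nat \<Rightarrow> 'a::banach" and b :: "nat \<Rightarrow> 'b::banach"
    and prod :: "'a \<Rightarrow> 'b \<Rightarrow> 'c::banach"
  assumes bb: "bounded_bilinear prod"
    and a: "summable (\<lambda>k. norm (a k))"
    and b: "summable (\<lambda>k. norm (b k))"
  shows "(\<lambda>k. \<Sum>i\<le>k. prod (a i) (b (k - i))) sums (prod (\<Sum>k. a k) (\<Sum>k. b k))"
proof -
  obtain K where K: "K > 0" "\<And>x y. norm (prod x y) \<le> norm x * norm y * K"
    using bounded_bilinear.pos_bounded[OF bb] by blast
  let ?S1 = "\<lambda>n::nat. {..<n} \<times> {..<n}"
  let ?S2 = "\<lambda>n::nat. {(i,j). i + j < n}"
  have S1_mono: "\<And>m n. m \<le> n \<Longrightarrow> ?S1 m \<subseteq> ?S1 n" by auto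
  have S2_le_S1: "\<And>n. ?S2 n \<subseteq> ?S1 n" by auto
  have S1_le_S2: "\<And>n. ?S1 (n div 2) \<subseteq> ?S2 n" by auto
  have finite_S1: "\<And>n. finite (?S1 n)" by simp
  with S2_le_S1 have finite_S2: "\<And>n. finite (?S2 n)" by (rule finite_subset)
  let ?g = "\<lambda>(i,j). prod (a i) (b j)"
  let ?f = "\<lambda>(i,j). K * (norm (a i) * norm (b j))"
  have f_nonneg: "\<And>x. 0 \<le> ?f x" using K by auto
  then have norm_sum_f: "\<And>A. norm (sum ?f A) = sum ?f A"
    unfolding real_norm_def
    by (simp only: abs_of_nonneg sum_nonneg [rule_format])
  have sp: "prod (sum a {..<n}) (sum b {..<n}) = sum ?g (?S1 n)" for n
  proof -
    have "prod (sum a {..<n}) (sum b {..<n}) = (\<Sum>i<n. prod (a i) (sum b {..<n}))"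
      by (rule bounded_bilinear.sum_left[OF bb])
    also have "\<dots> = (\<Sum>i<n. \<Sum>j<n. prod (a i) (b j))"
      by (simp only: bounded_bilinear.sum_right[OF bb])
    also have "\<dots> = sum ?g (?S1 n)" by (simp add: sum.cartesian_product)
    finally show ?thesis .
  qed
  have "(\<lambda>n. prod (\<Sum>k<n. a k) (\<Sum>k<n. b k)) \<longlonglongrightarrow> prod (\<Sum>k. a k) (\<Sum>k. b k)"
    by (intro bounded_bilinear.tendsto[OF bb] summable_LIMSEQ summable_norm_cancel [OF a] summable_norm_cancel [OF b])
  then have 1: "(\<lambda>n. sum ?g (?S1 n)) \<longlonglongrightarrow> prod (\<Sum>k. a k) (\<Sum>k. b k)"
    by (simp only: sp)
  have spf: "K * ((\<Sum>k<n. norm (a k)) * (\<Sum>k<n. norm (b k))) = sum ?f (?S1 n)" for n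
  proof -
    have "K * ((\<Sum>k<n. norm (a k)) * (\<Sum>k<n. norm (b k))) = K * (\<Sum>i<n. \<Sum>j<n. norm (a i) * norm (b j))"
      by (simp only: sum_product)
    also have "\<dots> = (\<Sum>i<n. \<Sum>j<n. K * (norm (a i) * norm (b j)))"
      by (simp only: sum_distrib_left)
    also have "\<dots> = sum ?f (?S1 n)" by (simp only: sum.cartesian_product)
    finally show ?thesis .
  qed
  have "(\<lambda>n. K * ((\<Sum>k<n. norm (a k)) * (\<Sum>k<n. norm (b k)))) \<longlonglongrightarrow> K * ((\<Sum>k. norm (a k)) * (\<Sum>k. norm (b k)))"
    using a b by (intro tendsto_mult tendsto_const summable_LIMSEQ)
  then have "(\<lambda>n. sum ?f (?S1 n)) \<longlonglongrightarrow> K * ((\<Sum>k. norm (a k)) * (\<Sum>k. norm (b k)))"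
    by (simp only: spf)
  then have "convergent (\<lambda>n. sum ?f (?S1 n))"
    by (rule convergentI)
  then have Cauchy: "Cauchy (\<lambda>n. sum ?f (?S1 n))"
    by (rule convergent_Cauchy)
  have "Zfun (\<lambda>n. sum ?f (?S1 n - ?S2 n)) sequentially"
  proof (rule ZfunI, simp only: eventually_sequentially norm_sum_f)
    fix r :: real
    assume r: "0 < r"
    from CauchyD [OF Cauchy r] obtain N
      where "\<forall>m\<ge>N. \<forall>n\<ge>N. norm (sum ?f (?S1 m) - sum ?f (?S1 n)) < r" ..
    then have "\<And>m n. N \<le> n \<Longrightarrow> n \<le> m \<Longrightarrow> norm (sum ?f (?S1 m - ?S1 n)) < r"
      by (simp only: sum_diff finite_S1 S1_mono)
    then have N: "\<And>m n. N \<le> n \<Longrightarrow> n \<le> m \<Longrightarrow> sum ?f (?S1 m - ?S1 n) < r"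
      by (simp only: norm_sum_f)
    show "\<exists>N. \<forall>n\<ge>N. sum ?f (?S1 n - ?S2 n) < r"
    proof (intro exI allI impI)
      fix n
      assume "2 * N \<le> n"
      then have n: "N \<le> n div 2" by simp
      have "sum ?f (?S1 n - ?S2 n) \<le> sum ?f (?S1 n - ?S1 (n div 2))"
        by (intro sum_mono2 finite_Diff finite_S1 f_nonneg Diff_mono subset_refl S1_le_S2)
      also have "\<dots> < r"
        using n div_le_dividend by (rule N)
      finally show "sum ?f (?S1 n - ?S2 n) < r" .
    qed
  qed
  then have "Zfun (\<lambda>n. sum ?g (?S1 n - ?S2 n)) sequentially"
  proof (rule Zfun_le [rule_format])
    fix n
    have "norm (sum ?g (?S1 n - ?S2 n)) \<le> (\<Sum>x\<in>?S1 n - ?S2 n. norm (?g x))"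
      by (rule norm_sum)
    also have "\<dots> \<le> sum ?f (?S1 n - ?S2 n)"
    proof (rule sum_mono)
      fix x assume "x \<in> ?S1 n - ?S2 n"
      obtain i j where x: "x = (i, j)" by (cases x)
      show "norm (?g x) \<le> ?f x" using K(2)[of "a i" "b j"] by (simp add: x ac_simps)
    qed
    finally show "norm (sum ?g (?S1 n - ?S2 n)) \<le> norm (sum ?f (?S1 n - ?S2 n))"
      by (simp only: norm_sum_f)
  qed
  then have 2: "(\<lambda>n. sum ?g (?S1 n) - sum ?g (?S2 n)) \<longlonglongrightarrow> 0"
    unfolding tendsto_Zfun_iff diff_0_right
    by (simp only: sum_diff finite_S1 S2_le_S1)
  with 1 have "(\<lambda>n. sum ?g (?S2 n)) \<longlonglongrightarrow> prod (\<Sum>k. a k) (\<Sum>k. b k)"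
    by (rule Lim_transform2)
  then show ?thesis
    by (simp only: sums_def sum.triangle_reindex)
qed

fun cc :: "nat \<Rightarrow> real" where
  "cc n = (if n = 0 then 0 else if n = 1 then 1/2 else (1/2) * (\<Sum>i\<in>{1..<n}. cc i * cc (n - i)))"

declare cc.simps[simp del]

lemma cc_0[simp]: "cc 0 = 0" by (simp add: cc.simps)
lemma cc_1[simp]: "cc 1 = 1/2" by (simp add: cc.simps)
lemma cc_Suc0[simp]: "cc (Suc 0) = 1/2" by (simp add: cc.simps)
lemma cc_ge2: "n \<ge> 2 \<Longrightarrow> cc n = (1/2) * (\<Sum>i\<in>{1..<n}. cc i * cc (n - i))"
  by (subst cc.simps) simp

lemma cc_nonneg: "cc n \<ge> 0"
proof (induction n rule: less_induct)
  case (less n)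
  show ?case
  proof (cases "n \<ge> 2")
    case True
    have "(\<Sum>i\<in>{1..<n}. cc i * cc (n - i)) \<ge> 0"
      using less by (intro sum_nonneg mult_nonneg_nonneg) auto
    then show ?thesis using cc_ge2[OF True] by simp
  next
    case False
    then have "n = 0 \<or> n = 1" by auto
    then show ?thesis by auto
  qed
qed

lemma cc_conv: "(\<Sum>i\<le>n. cc i * cc (n - i)) = 2 * cc n - (if n = 1 then 1 else 0)"
proof (cases "n \<ge> 2")
  case True
  have "{..n} = insert 0 (insert n {1..<n})" using True by auto
  then have "(\<Sum>i\<le>n. cc i * cc (n - i)) = cc 0 * cc n + (cc n * cc 0 + (\<Sum>i\<in>{1..<n}. cc i * cc (n - i)))"
    using True by (simp add: sum.insert)
  also have "\<dots> = 2 * cc n" using cc_ge2[OF True] by simp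
  finally show ?thesis using True by simp
next
  case False
  then have "n = 0 \<or> n = 1" by auto
  then show ?thesis by auto
qed

lemma cc_partial: "(\<Sum>i<N. cc i) \<le> 1"
proof (induction N)
  case 0 then show ?case by simp
next
  case (Suc N)
  define P where "P = (\<Sum>i<N. cc i)"
  have P0: "P \<ge> 0" unfolding P_def by (intro sum_nonneg cc_nonneg)
  have tri: "(\<Sum>k<Suc N. \<Sum>i\<le>k. cc i * cc (k - i)) = (\<Sum>(i,j)\<in>{(i,j). i + j < Suc N}. cc i * cc j)"
    by (rule sum.triangle_reindex[symmetric])
  have "(\<Sum>(i,j)\<in>{(i,j). i + j < Suc N}. cc i * cc j) = (\<Sum>(i,j)\<in>{(i,j). i + j < Suc N} \<inter> ({1..} \<times> {1..}). cc i * cc j)"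
  proof (rule sum.mono_neutral_right)
    show "finite {(i, j). i + j < Suc N}"
      by (rule finite_subset[of _ "{..<Suc N} \<times> {..<Suc N}"]) auto
  qed (auto simp: Suc_le_eq intro!: Nat.gr0I)
  also have "\<dots> \<le> (\<Sum>(i,j)\<in>{..<N} \<times> {..<N}. cc i * cc j)"
    by (rule sum_mono2) (auto intro: mult_nonneg_nonneg cc_nonneg)
  also have "\<dots> = P * P"
    by (simp add: P_def sum_product sum.cartesian_product)
  finally have le: "(\<Sum>k<Suc N. \<Sum>i\<le>k. cc i * cc (k - i)) \<le> P * P" using tri by simp
  have "(\<Sum>k<Suc N. \<Sum>i\<le>k. cc i * cc (k - i)) = (\<Sum>k<Suc N. 2 * cc k - (if k = 1 then 1 else 0))"
    by (simp add: cc_conv)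
  also have "\<dots> = 2 * (\<Sum>k<Suc N. cc k) - (\<Sum>k<Suc N. (if k = 1 then 1 else 0))"
    by (simp add: sum_subtractf sum_distrib_left)
  also have "(\<Sum>k<Suc N. (if k = 1 then (1::real) else 0)) = (if 1 < Suc N then 1 else 0)"
    by (simp add: sum.delta)
  finally have eq: "(\<Sum>k<Suc N. \<Sum>i\<le>k. cc i * cc (k - i)) = 2 * (\<Sum>k<Suc N. cc k) - (if 1 < Suc N then 1 else 0)" .
  have "P \<le> 1" using Suc.IH by (simp add: P_def)
  then have "P * P \<le> 1" using P0 by (simp add: mult_le_one)
  show ?case
  proof (cases "1 < Suc N")
    case True
    then show ?thesis using eq le \<open>P * P \<le> 1\<close> by simp
  next
    case False
    then have "N = 0" by simp
    then show ?thesis by simp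
  qed
qed

lemma cc_summable: "summable cc"
  by (rule summableI_nonneg_bounded[where x=1]) (auto intro: cc_nonneg cc_partial)

lemma cc_suminf: "suminf cc \<le> 1"
  by (rule suminf_le_const[OF cc_summable cc_partial])



lemma scaleC_scaleR_comm: "scaleC c (scaleR r (x::'a::chilbert)) = scaleR r (scaleC c x)"
  by (metis scaleC_of_real scaleC_scaleC mult.commute)

lemma bl_scaleC: "bounded_linear (scaleC c :: 'a::chilbert \<Rightarrow> 'a)"
  by (rule bounded_linear_intro[where K="cmod c"])
     (auto simp: scaleC_add_right scaleC_scaleR_comm norm_scaleC ac_simps)

lemma bl_cinner_left: "bounded_linear (\<lambda>w::'a::chilbert. cinner w v)"
proof (rule bounded_linear_intro[where K="norm v"])
  fix x y show "cinner (x + y) v = cinner x v + cinner y v" by (rule cinner_add_left)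
next
  fix r x show "cinner (scaleR r x) v = scaleR r (cinner x v)"
    by (simp add: cinner_scaleR_left scaleR_conv_of_real)
next
  fix x show "norm (cinner x v) \<le> norm x * norm v" by (rule cinner_CS)
qed

lemma BH_I: "bounded_linear X \<Longrightarrow> (\<And>c x. X (scaleC c x) = scaleC c (X x)) \<Longrightarrow> X \<in> BH"
  by (simp add: BH_def bounded_clinear_def)

lemma BH_scaleR: "X \<in> BH \<Longrightarrow> X (scaleR r x) = scaleR r (X x)"
  by (metis BH_scaleC scaleC_of_real)

lemma BH_comp:
  assumes "X \<in> BH" "Y \<in> BH" shows "(\<lambda>x. X (Y x)) \<in> BH"
proof (rule BH_I)
  show "bounded_linear (\<lambda>x. X (Y x))"
    using bounded_linear_compose[OF BH_bl[OF assms(1)] BH_bl[OF assms(2)]] .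
  fix c x show "X (Y (scaleC c x)) = scaleC c (X (Y x))" by (simp add: BH_scaleC assms)
qed

lemma BH_funpow: assumes "B \<in> BH" shows "(B ^^ n) \<in> BH"
proof (induction n)
  case 0 show ?case by (simp add: id_def BH_I)
next
  case (Suc n)
  have "(\<lambda>x. B ((B ^^ n) x)) \<in> BH" by (rule BH_comp[OF assms Suc.IH])
  then show ?case by (simp add: comp_def)
qed

lemma series_sqrt:
  fixes B :: "'a::chilbert \<Rightarrow> 'a"
  assumes BB: "B \<in> BH" and Bsa: "\<And>x y. cinner (B x) y = cinner x (B y)"
    and Bn: "\<And>v. norm (B v) \<le> norm v"
  shows "\<exists>S \<in> BH. (\<forall>v. S (S v) = 2 *\<^sub>R S v - B v) \<and>
     (\<forall>v. Im (cinner (S v) v) = 0 \<and> Re (cinner (S v) v) \<le> (norm v)\<^sup>2) \<and>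
     (\<forall>Z \<in> BH. (\<forall>v. Z (B v) = B (Z v)) \<longrightarrow> (\<forall>v. Z (S v) = S (Z v)))"
proof -
  define Bp where "Bp n = B ^^ n" for n
  have BpB: "Bp n \<in> BH" for n unfolding Bp_def using BB by (rule BH_funpow)
  have Bp_Suc: "Bp (Suc n) v = B (Bp n v)" for n v by (simp add: Bp_def)
  have Bp_add: "Bp (i + j) v = Bp i (Bp j v)" for i j v by (simp add: Bp_def funpow_add)
  have Bp_norm: "norm (Bp n v) \<le> norm v" for n v
  proof (induction n)
    case 0 then show ?case by (simp add: Bp_def)
  next
    case (Suc n) then show ?case using Bn[of "Bp n v"] by (simp add: Bp_Suc)
  qed
  have Bp_sa: "cinner (Bp n x) y = cinner x (Bp n y)" for n x y
  proof (induction n arbitrary: x y)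
    case 0 then show ?case by (simp add: Bp_def)
  next
    case (Suc n)
    have "cinner (Bp (Suc n) x) y = cinner (Bp n x) (B y)" by (simp add: Bp_Suc Bsa)
    also have "\<dots> = cinner x (Bp n (B y))" by (rule Suc.IH)
    also have "Bp n (B y) = Bp (Suc n) y" using Bp_add[of n 1 y] by (simp add: Bp_def)
    finally show ?case .
  qed
  define P where "P n = Blinfun (Bp n)" for n
  have P_apply: "blinfun_apply (P n) = Bp n" for n
    unfolding P_def by (rule bounded_linear_Blinfun_apply[OF BH_bl[OF BpB]])
  have P_norm: "norm (P n) \<le> 1" for n
    by (rule norm_blinfun_bound) (auto simp: P_apply Bp_norm)
  define a where "a i = cc i *\<^sub>R P i" for i
  have a_norm: "norm (a i) \<le> cc i" for i
    using P_norm[of i] cc_nonneg[of i] by (simp add: a_def mult_left_le)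
  have a_ns: "summable (\<lambda>i. norm (a i))"
    by (rule summable_comparison_test[OF _ cc_summable]) (auto intro: a_norm)
  have a_s: "summable a" using a_ns by (rule summable_norm_cancel)
  define SL where "SL = suminf a"
  have comp_a: "a i o\<^sub>L a j = (cc i * cc j) *\<^sub>R P (i + j)" for i j
    by (rule blinfun_eqI) (simp add: a_def P_apply Bp_add blinfun.scaleR_left blinfun.scaleR_right)
  have "(\<lambda>k. \<Sum>i\<le>k. a i o\<^sub>L a (k - i)) sums (SL o\<^sub>L SL)"
    unfolding SL_def by (rule bb_Cauchy_product_sums[OF bounded_bilinear_blinfun_compose a_ns a_ns])
  moreover have "(\<lambda>k. \<Sum>i\<le>k. a i o\<^sub>L a (k - i)) = (\<lambda>k. (2 * cc k - (if k = 1 then 1 else 0)) *\<^sub>R P k)"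
  proof
    fix k
    have "(\<Sum>i\<le>k. a i o\<^sub>L a (k - i)) = (\<Sum>i\<le>k. (cc i * cc (k - i)) *\<^sub>R P k)"
      by (intro sum.cong refl) (simp add: comp_a)
    also have "\<dots> = (\<Sum>i\<le>k. cc i * cc (k - i)) *\<^sub>R P k" by (simp add: scaleR_sum_left)
    finally show "(\<Sum>i\<le>k. a i o\<^sub>L a (k - i)) = (2 * cc k - (if k = 1 then 1 else 0)) *\<^sub>R P k"
      by (simp add: cc_conv)
  qed
  ultimately have s1: "(\<lambda>k. (2 * cc k - (if k = 1 then 1 else 0)) *\<^sub>R P k) sums (SL o\<^sub>L SL)" by simp
  have "(\<lambda>k. 2 *\<^sub>R a k - (if k = 1 then P k else 0)) sums (2 *\<^sub>R SL - P 1)"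
  proof (rule sums_diff)
    show "(\<lambda>k. 2 *\<^sub>R a k) sums (2 *\<^sub>R SL)"
      unfolding SL_def using a_s by (intro bounded_linear.sums[OF bounded_linear_scaleR_right]) (simp add: summable_sums)
    show "(\<lambda>k. if k = 1 then P k else 0) sums P 1" by (rule sums_single)
  qed
  moreover have "(\<lambda>k. 2 *\<^sub>R a k - (if k = 1 then P k else 0)) = (\<lambda>k. (2 * cc k - (if k = 1 then 1 else 0)) *\<^sub>R P k)"
    by (auto simp: a_def algebra_simps)
  ultimately have "(\<lambda>k. (2 * cc k - (if k = 1 then 1 else 0)) *\<^sub>R P k) sums (2 *\<^sub>R SL - P 1)"
    by simp
  with s1 have "SL o\<^sub>L SL = 2 *\<^sub>R SL - P 1" by (rule sums_unique2)
  then have sq: "blinfun_apply SL (blinfun_apply SL v) = 2 *\<^sub>R blinfun_apply SL v - B v" for v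
  proof -
    have "blinfun_apply (SL o\<^sub>L SL) v = blinfun_apply (2 *\<^sub>R SL - P 1) v"
      using \<open>SL o\<^sub>L SL = 2 *\<^sub>R SL - P 1\<close> by (rule arg_cong)
    moreover have "Bp 1 = B" by (simp add: Bp_def)
    ultimately show ?thesis by (simp add: blinfun.diff_left blinfun.scaleR_left P_apply)
  qed
  define S where "S = blinfun_apply SL"
  have S_ser: "(\<lambda>i. cc i *\<^sub>R Bp i v) sums S v" for v
  proof -
    have "(\<lambda>i. blinfun_apply (a i) v) sums blinfun_apply SL v"
      unfolding SL_def using a_s by (intro bounded_linear.sums[OF blinfun.bounded_linear_left]) (simp add: summable_sums)
    then show ?thesis by (simp add: S_def a_def blinfun.scaleR_left P_apply)
  qed
  have S_bl: "bounded_linear S" unfolding S_def by (rule blinfun.bounded_linear_right)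
  have S_C: "S (scaleC c v) = scaleC c (S v)" for c v
  proof -
    have "(\<lambda>i. scaleC c (cc i *\<^sub>R Bp i v)) sums scaleC c (S v)"
      by (rule bounded_linear.sums[OF bl_scaleC S_ser])
    moreover have "(\<lambda>i. scaleC c (cc i *\<^sub>R Bp i v)) = (\<lambda>i. cc i *\<^sub>R Bp i (scaleC c v))"
      by (simp add: BH_scaleC[OF BpB] scaleC_scaleR_comm)
    ultimately have "(\<lambda>i. cc i *\<^sub>R Bp i (scaleC c v)) sums scaleC c (S v)" by simp
    with S_ser[of "scaleC c v"] show ?thesis by (rule sums_unique2)
  qed
  have SB: "S \<in> BH" using S_bl S_C by (rule BH_I)
  show ?thesis
  proof (intro bexI conjI allI ballI impI)
    show "S \<in> BH" by (rule SB)
  next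
    fix v show "S (S v) = 2 *\<^sub>R S v - B v" by (simp add: S_def sq)
  next
    fix v
    have ser: "(\<lambda>i. complex_of_real (cc i) * cinner (Bp i v) v) sums cinner (S v) v"
    proof -
      have "(\<lambda>i. cinner (cc i *\<^sub>R Bp i v) v) sums cinner (S v) v"
        by (rule bounded_linear.sums[OF bl_cinner_left S_ser])
      then show ?thesis by (simp add: cinner_scaleR_left)
    qed
    have im0: "Im (cinner (Bp i v) v) = 0" for i
    proof -
      have "cinner (Bp i v) v = cnj (cinner (Bp i v) v)"
        using Bp_sa[of i v v] cinner_commute[of v "Bp i v"] by simp
      then have "Im (cinner (Bp i v) v) = Im (cnj (cinner (Bp i v) v))" by (rule arg_cong)
      then show ?thesis by simp
    qed
    have "(\<lambda>i. Im (complex_of_real (cc i) * cinner (Bp i v) v)) sums Im (cinner (S v) v)"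
      by (rule bounded_linear.sums[OF bounded_linear_Im ser])
    then have "(\<lambda>i. 0) sums Im (cinner (S v) v)" by (simp add: im0)
    with sums_zero have "0 = Im (cinner (S v) v)" by (rule sums_unique2)
    then show "Im (cinner (S v) v) = 0" by simp
  next
    fix v
    have ser: "(\<lambda>i. complex_of_real (cc i) * cinner (Bp i v) v) sums cinner (S v) v"
    proof -
      have "(\<lambda>i. cinner (cc i *\<^sub>R Bp i v) v) sums cinner (S v) v"
        by (rule bounded_linear.sums[OF bl_cinner_left S_ser])
      then show ?thesis by (simp add: cinner_scaleR_left)
    qed
    have "(\<lambda>i. Re (complex_of_real (cc i) * cinner (Bp i v) v)) sums Re (cinner (S v) v)"
      by (rule bounded_linear.sums[OF bounded_linear_Re ser])
    then have rs: "(\<lambda>i. cc i * Re (cinner (Bp i v) v)) sums Re (cinner (S v) v)" by simp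
    have le: "cc i * Re (cinner (Bp i v) v) \<le> cc i * (norm v)\<^sup>2" for i
    proof -
      have "Re (cinner (Bp i v) v) \<le> norm (Bp i v) * norm v"
        using Re_cinner_le abs_le_D1 by blast
      also have "\<dots> \<le> norm v * norm v" using Bp_norm[of i v] by (simp add: mult_right_mono)
      finally show ?thesis using cc_nonneg[of i] by (simp add: mult_left_mono power2_eq_square)
    qed
    have s2: "(\<lambda>i. cc i * (norm v)\<^sup>2) sums (suminf cc * (norm v)\<^sup>2)"
      using cc_summable by (intro sums_mult2) (simp add: summable_sums)
    have "Re (cinner (S v) v) \<le> suminf cc * (norm v)\<^sup>2"
      by (rule sums_le[OF le rs s2])
    also have "\<dots> \<le> 1 * (norm v)\<^sup>2" using cc_suminf by (intro mult_right_mono) auto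
    finally show "Re (cinner (S v) v) \<le> (norm v)\<^sup>2" by simp
  next
    fix Z v assume ZB: "Z \<in> BH" and Zc: "\<forall>v. Z (B v) = B (Z v)"
    have ZBp: "Z (Bp i w) = Bp i (Z w)" for i w
    proof (induction i)
      case 0 then show ?case by (simp add: Bp_def)
    next
      case (Suc i) then show ?case using Zc by (simp add: Bp_Suc)
    qed
    have "(\<lambda>i. Z (cc i *\<^sub>R Bp i v)) sums Z (S v)"
      by (rule bounded_linear.sums[OF BH_bl[OF ZB] S_ser])
    moreover have "(\<lambda>i. Z (cc i *\<^sub>R Bp i v)) = (\<lambda>i. cc i *\<^sub>R Bp i (Z v))"
      by (simp add: ZBp BH_scaleR[OF ZB])
    ultimately have "(\<lambda>i. cc i *\<^sub>R Bp i (Z v)) sums Z (S v)" by simp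
    with S_ser[of "Z v"] have "S (Z v) = Z (S v)" by (rule sums_unique2)
    then show "Z (S v) = S (Z v)" by simp
  qed
qed



lemma sqrt_ex1:
  fixes A :: "'a::chilbert \<Rightarrow> 'a"
  assumes A: "positive_op A"
  shows "\<exists>!R. positive_op R \<and> R \<circ> R = A"
proof -
  have AB: "A \<in> BH" using A by (rule pos_BH)
  obtain M where M: "M > 0" "\<And>v. norm (A v) \<le> norm v * M" using BH_bound[OF AB] by blast
  have AN: "(norm (A v))\<^sup>2 \<le> M * Re (cinner (A v) v)" for v
    using pos_norm_bound[OF A, of M v] M by simp
  define B where "B v = v - (1/M) *\<^sub>R A v" for v
  have BB: "B \<in> BH"
  proof (rule BH_I)
    have "bounded_linear (\<lambda>v. (1/M) *\<^sub>R A v)"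
      by (rule bounded_linear_compose[OF bounded_linear_scaleR_right BH_bl[OF AB]])
    then show "bounded_linear B" unfolding B_def
      by (rule bounded_linear_sub[OF bounded_linear_ident])
  next
    fix c x show "B (scaleC c x) = scaleC c (B x)"
      by (simp add: B_def BH_scaleC[OF AB] scaleC_scaleR_comm scaleC_diff_right)
  qed
  have Bsa: "cinner (B x) y = cinner x (B y)" for x y
    by (simp add: B_def cinner_diff_left cinner_diff_right cinner_scaleR_left cinner_scaleR_right pos_selfadj[OF A])
  have Bn: "norm (B v) \<le> norm v" for v
  proof -
    define q where "q = Re (cinner (A v) v)"
    have q0: "q \<ge> 0" using pos_nonneg[OF A] by (simp add: q_def)
    have "(norm (B v))\<^sup>2 = (norm v)\<^sup>2 + (norm ((1/M) *\<^sub>R A v))\<^sup>2 - 2 * Re (cinner v ((1/M) *\<^sub>R A v))"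
      unfolding B_def by (rule norm_diff_sq)
    also have "Re (cinner v ((1/M) *\<^sub>R A v)) = (1/M) * q"
      by (simp add: cinner_scaleR_right q_def Re_cinner_commute[of v "A v"])
    also have "(norm ((1/M) *\<^sub>R A v))\<^sup>2 = (1/M)\<^sup>2 * (norm (A v))\<^sup>2"
      using M(1) by (simp add: power_divide)
    also have "(1/M)\<^sup>2 * (norm (A v))\<^sup>2 \<le> (1/M)\<^sup>2 * (M * q)"
      using AN[of v] by (simp add: q_def mult_left_mono)
    also have "(1/M)\<^sup>2 * (M * q) = (1/M) * q" using M(1) by (simp add: power2_eq_square)
    finally have "(norm (B v))\<^sup>2 \<le> (norm v)\<^sup>2 - (1/M) * q" by simp
    also have "\<dots> \<le> (norm v)\<^sup>2" using q0 M(1) by simp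
    finally show ?thesis by (rule power2_le_imp_le) simp
  qed
  obtain S where SB: "S \<in> BH" and Ssq: "\<And>v. S (S v) = 2 *\<^sub>R S v - B v"
    and Spos: "\<And>v. Im (cinner (S v) v) = 0 \<and> Re (cinner (S v) v) \<le> (norm v)\<^sup>2"
    and Scomm: "\<And>Z v. Z \<in> BH \<Longrightarrow> (\<forall>v. Z (B v) = B (Z v)) \<Longrightarrow> Z (S v) = S (Z v)"
    using series_sqrt[OF BB Bsa Bn] by blast
  define R where "R v = sqrt M *\<^sub>R (v - S v)" for v
  have RB: "R \<in> BH"
  proof (rule BH_I)
    have "bounded_linear (\<lambda>v. v - S v)" by (rule bounded_linear_sub[OF bounded_linear_ident BH_bl[OF SB]])
    then show "bounded_linear R" unfolding R_def
      by (rule bounded_linear_compose[OF bounded_linear_scaleR_right])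
  next
    fix c x show "R (scaleC c x) = scaleC c (R x)"
      by (simp add: R_def BH_scaleC[OF SB] scaleC_scaleR_comm scaleC_diff_right)
  qed
  have Rpos: "positive_op R"
    unfolding positive_op_def
  proof (intro conjI allI RB)
    fix v
    have e: "cinner (R v) v = complex_of_real (sqrt M) * (cinner v v - cinner (S v) v)"
      by (simp add: R_def cinner_scaleR_left cinner_diff_left)
    show "Im (cinner (R v) v) = 0" using Spos[of v] by (simp add: e cinner_self_Im)
    show "Re (cinner (R v) v) \<ge> 0" using Spos[of v] M(1) by (simp add: e cinner_self_Re)
  qed
  have RR: "R (R v) = A v" for v
  proof -
    define w where "w = v - S v"
    have Rv: "R v = sqrt M *\<^sub>R w" by (simp add: R_def w_def)
    have "R (R v) = sqrt M *\<^sub>R (R v - S (R v))" by (rule R_def)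
    also have "\<dots> = sqrt M *\<^sub>R (sqrt M *\<^sub>R w - sqrt M *\<^sub>R S w)"
      by (simp only: Rv BH_scaleR[OF SB])
    also have "\<dots> = (sqrt M * sqrt M) *\<^sub>R (w - S w)" by (simp add: scaleR_diff_right)
    also have "sqrt M * sqrt M = M" using M(1) by simp
    also have "w - S w = (1/M) *\<^sub>R A v"
      by (simp add: w_def BH_diff[OF SB] Ssq B_def scaleR_2)
    finally show ?thesis using M(1) by simp
  qed
  have RRA: "R \<circ> R = A" by (rule ext) (simp add: RR)
  show ?thesis
  proof (rule ex1I[where a=R])
    show "positive_op R \<and> R \<circ> R = A" using Rpos RRA by simp
  next
    fix R' assume H: "positive_op R' \<and> R' \<circ> R' = A"
    then have R'pos: "positive_op R'" and R'R': "\<And>v. R' (R' v) = A v"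
      by (auto simp: fun_eq_iff)
    have R'B: "R' \<in> BH" using R'pos by (rule pos_BH)
    have cA: "R' (A v) = A (R' v)" for v by (simp flip: R'R')
    have cB: "\<forall>v. R' (B v) = B (R' v)"
      by (simp add: B_def BH_diff[OF R'B] BH_scaleR[OF R'B] cA)
    have cR: "R' (R v) = R (R' v)" for v
      using Scomm[OF R'B cB] by (simp add: R_def BH_scaleR[OF R'B] BH_diff[OF R'B])
    show "R' = R"
    proof
      fix x
      define y where "y = R x - R' x"
      have sum0: "R y + R' y = 0"
        by (simp add: y_def BH_diff[OF RB] BH_diff[OF R'B] RR R'R' cR)
      have "cinner (R y) y + cinner (R' y) y = 0"
        using arg_cong[of _ _ "\<lambda>u. cinner u y", OF sum0] by (simp add: cinner_add_left)
      then have "Re (cinner (R y) y + cinner (R' y) y) = 0" by simp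
      then have "Re (cinner (R y) y) + Re (cinner (R' y) y) = 0" by simp
      moreover have "Re (cinner (R y) y) \<ge> 0" by (rule pos_nonneg[OF Rpos])
      moreover have "Re (cinner (R' y) y) \<ge> 0" by (rule pos_nonneg[OF R'pos])
      ultimately have "Re (cinner (R y) y) = 0" "Re (cinner (R' y) y) = 0" by linarith+
      then have Ry: "R y = 0" and R'y: "R' y = 0"
        using pos_zero[OF Rpos] pos_zero[OF R'pos] by blast+
      have "cinner y y = cinner (R x) y - cinner (R' x) y"
        by (simp add: y_def cinner_diff_left)
      also have "\<dots> = cinner x (R y) - cinner x (R' y)"
        by (simp add: pos_selfadj[OF Rpos] pos_selfadj[OF R'pos])
      also have "\<dots> = 0" by (simp add: Ry R'y)
      finally have "y = 0" by (simp add: cinner_self_eq_zero)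
      then show "R' x = R x" by (simp add: y_def)
    qed
  qed
qed

lemma op_sqrt_prop:
  fixes A :: "'a::chilbert \<Rightarrow> 'a"
  assumes "positive_op A"
  shows "positive_op (op_sqrt A) \<and> op_sqrt A \<circ> op_sqrt A = A"
  unfolding op_sqrt_def by (rule theI'[OF sqrt_ex1[OF assms]])

lemma B_sqrtA_ker:
  fixes A X :: "'a::chilbert \<Rightarrow> 'a"
  assumes A: "positive_op A" and X: "X \<in> B_sqrtA A" and z: "A z = 0"
  shows "A (X z) = 0"
proof -
  have XB: "X \<in> BH" and rng: "range (adjoint X \<circ> op_sqrt A) \<subseteq> range (op_sqrt A)"
    using X by (auto simp: B_sqrtA_def)
  show ?thesis
    using ker_inv[OF A _ _ XB rng z] op_sqrt_prop[OF A] by blast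
qed

theorem mainTheorem13:
  fixes A T :: "'a::chilbert \<Rightarrow> 'a"
  assumes "positive_op A"
    and "A \<noteq> (\<lambda>_. 0)"
    and "T \<in> B_sqrtA A"
  shows "A_invertible A T \<longleftrightarrow>
         (\<exists>S1 \<in> B_sqrtA A. \<exists>S2 \<in> B_sqrtA A. A \<circ> T \<circ> S1 = A \<and> A \<circ> S2 \<circ> T = A)"
proof
  assume "A_invertible A T"
  then obtain S where "S \<in> B_sqrtA A" "A \<circ> T \<circ> S = A" "A \<circ> S \<circ> T = A"
    by (auto simp: A_invertible_def)
  then show "\<exists>S1 \<in> B_sqrtA A. \<exists>S2 \<in> B_sqrtA A. A \<circ> T \<circ> S1 = A \<and> A \<circ> S2 \<circ> T = A" by blast
next
  assume "\<exists>S1 \<in> B_sqrtA A. \<exists>S2 \<in> B_sqrtA A. A \<circ> T \<circ> S1 = A \<and> A \<circ> S2 \<circ> T = A"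
  then obtain S1 S2 where S1: "S1 \<in> B_sqrtA A" and S2: "S2 \<in> B_sqrtA A"
    and h1: "A \<circ> T \<circ> S1 = A" and h2: "A \<circ> S2 \<circ> T = A" by blast
  have Apos: "positive_op A" by (rule assms(1))
  have AB: "A \<in> BH" using Apos by (rule pos_BH)
  have TB: "T \<in> BH" using assms(3) by (simp add: B_sqrtA_def)
  have S1B: "S1 \<in> BH" and S2B: "S2 \<in> BH" using S1 S2 by (simp_all add: B_sqrtA_def)
  have e1: "A (T (S1 x)) = A x" for x using fun_cong[OF h1, of x] by simp
  have e2: "A (S2 (T x)) = A x" for x using fun_cong[OF h2, of x] by simp
  have eq: "A (S1 x) = A (S2 x)" for x
  proof -
    have "A (T (S1 x) - x) = 0" by (simp add: BH_diff[OF AB] e1)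
    then have "A (S2 (T (S1 x) - x)) = 0" by (rule B_sqrtA_ker[OF Apos S2])
    then have "A (S2 (T (S1 x))) = A (S2 x)" by (simp add: BH_diff[OF AB] BH_diff[OF S2B])
    then show ?thesis by (simp add: e2)
  qed
  have S1T: "A \<circ> S1 \<circ> T = A"
  proof
    fix x show "(A \<circ> S1 \<circ> T) x = A x" by (simp add: eq e2)
  qed
  have T0: "T \<noteq> (\<lambda>_. 0)"
  proof
    assume "T = (\<lambda>_. 0)"
    then have "A x = 0" for x using e2[of x] by (simp add: BH_zero[OF S2B] BH_zero[OF AB])
    then show False using assms(2) by auto
  qed
  have S10: "S1 \<noteq> (\<lambda>_. 0)"
  proof
    assume "S1 = (\<lambda>_. 0)"
    then have "A x = 0" for x using e1[of x] by (simp add: BH_zero[OF TB] BH_zero[OF AB])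
    then show False using assms(2) by auto
  qed
  show "A_invertible A T"
    unfolding A_invertible_def using assms(3) T0 S1 S10 h1 S1T by blast
qed


end
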